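(* Let $G$ be a finitely generated, torsion-free, $2$-step nilpotent group whose maximal ring of scalars is $\mathbb{Z}$. Then $G$ cannot be decomposed as a direct product $G=H\times K$ of two non-abelian subgroups $H,K$.
   Context: Commutators: $[g,h]=g^{-1}h^{-1}gh$. Rings are associative with identity. Let $f:G/Z(G)\times G/Z(G)\to G'$, $f(gZ(G),hZ(G))=[g,h]$. A commutative ring $R$ is a ring of scalars of $G$ if there are faithful actions of $R$ by endomorphisms on $M=G/Z(G)$ and $N=G'$ with $f(rx,y)=f(x,ry)=rf(x,y)$ for all $r\in R$, $x,y\in M$. Identifying each ring of scalars with its image in $\mathrm{End}(M)$, the maximal ring of scalars is the one containing all others (as subrings). *)

theory Defs
  imports "HOL-Algebra.Algebra"
begin

text \<open>Commutator with the paper's convention [g,h] = g^-1 h^-1 g h.\<close>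
definition comm :: "('a, 'b) monoid_scheme \<Rightarrow> 'a \<Rightarrow> 'a \<Rightarrow> 'a" where
  "comm G g h = inv\<^bsub>G\<^esub> g \<otimes>\<^bsub>G\<^esub> inv\<^bsub>G\<^esub> h \<otimes>\<^bsub>G\<^esub> g \<otimes>\<^bsub>G\<^esub> h"

definition grp_center :: "('a, 'b) monoid_scheme \<Rightarrow> 'a set" where
  "grp_center G = {z \<in> carrier G. \<forall>g \<in> carrier G. z \<otimes>\<^bsub>G\<^esub> g = g \<otimes>\<^bsub>G\<^esub> z}"

definition comm_subgroup :: "('a, 'b) monoid_scheme \<Rightarrow> 'a set" where
  "comm_subgroup G = generate G {comm G g h | g h. g \<in> carrier G \<and> h \<in> carrier G}"

definition finitely_generated :: "('a, 'b) monoid_scheme \<Rightarrow> bool" where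
  "finitely_generated G \<longleftrightarrow> (\<exists>S. finite S \<and> S \<subseteq> carrier G \<and> generate G S = carrier G)"

definition torsion_free :: "('a, 'b) monoid_scheme \<Rightarrow> bool" where
  "torsion_free G \<longleftrightarrow> (\<forall>g \<in> carrier G. \<forall>n::nat. n > 0 \<and> g [^]\<^bsub>G\<^esub> n = \<one>\<^bsub>G\<^esub> \<longrightarrow> g = \<one>\<^bsub>G\<^esub>)"

text \<open>2-step nilpotent (nilpotency class at most 2): G' is central.\<close>
definition two_step_nilpotent :: "('a, 'b) monoid_scheme \<Rightarrow> bool" where
  "two_step_nilpotent G \<longleftrightarrow> group G \<and> comm_subgroup G \<subseteq> grp_center G"

definition abelian_subset :: "('a, 'b) monoid_scheme \<Rightarrow> 'a set \<Rightarrow> bool" where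
  "abelian_subset G H \<longleftrightarrow> (\<forall>x \<in> H. \<forall>y \<in> H. x \<otimes>\<^bsub>G\<^esub> y = y \<otimes>\<^bsub>G\<^esub> x)"

definition Mgrp :: "('a, 'b) monoid_scheme \<Rightarrow> 'a set monoid" where
  "Mgrp G = G Mod grp_center G"

definition Ngrp :: "('a, 'b) monoid_scheme \<Rightarrow> ('a, 'b) monoid_scheme" where
  "Ngrp G = G\<lparr>carrier := comm_subgroup G\<rparr>"

text \<open>f(gZ(G), hZ(G)) = [g,h] (well defined for 2-step nilpotent G).\<close>
definition fcomm :: "('a, 'b) monoid_scheme \<Rightarrow> 'a set \<Rightarrow> 'a set \<Rightarrow> 'a" where
  "fcomm G x y = comm G (SOME g. g \<in> x) (SOME h. h \<in> y)"

text \<open>An action of the ring R on the (abelian) group A by endomorphisms,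
  i.e. a unital ring homomorphism R \<rightarrow> End(A); and faithfulness.\<close>
definition endo_action :: "('r, 'c) ring_scheme \<Rightarrow> ('m, 'd) monoid_scheme \<Rightarrow> ('r \<Rightarrow> 'm \<Rightarrow> 'm) \<Rightarrow> bool" where
  "endo_action R A \<rho> \<longleftrightarrow>
     (\<forall>r \<in> carrier R. \<rho> r \<in> hom A A) \<and>
     (\<forall>x \<in> carrier A. \<rho> \<one>\<^bsub>R\<^esub> x = x) \<and>
     (\<forall>r \<in> carrier R. \<forall>s \<in> carrier R. \<forall>x \<in> carrier A.
        \<rho> (r \<oplus>\<^bsub>R\<^esub> s) x = \<rho> r x \<otimes>\<^bsub>A\<^esub> \<rho> s x) \<and>
     (\<forall>r \<in> carrier R. \<forall>s \<in> carrier R. \<forall>x \<in> carrier A.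
        \<rho> (r \<otimes>\<^bsub>R\<^esub> s) x = \<rho> r (\<rho> s x))"

definition faithful_action :: "('r, 'c) ring_scheme \<Rightarrow> ('m, 'd) monoid_scheme \<Rightarrow> ('r \<Rightarrow> 'm \<Rightarrow> 'm) \<Rightarrow> bool" where
  "faithful_action R A \<rho> \<longleftrightarrow> endo_action R A \<rho> \<and>
     (\<forall>r \<in> carrier R. \<forall>s \<in> carrier R. (\<forall>x \<in> carrier A. \<rho> r x = \<rho> s x) \<longrightarrow> r = s)"

definition ring_of_scalars ::
  "('a, 'b) monoid_scheme \<Rightarrow> ('r, 'c) ring_scheme \<Rightarrow> ('r \<Rightarrow> 'a set \<Rightarrow> 'a set) \<Rightarrow> ('r \<Rightarrow> 'a \<Rightarrow> 'a) \<Rightarrow> bool" where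
  "ring_of_scalars G R \<rho>M \<rho>N \<longleftrightarrow>
     cring R \<and> faithful_action R (Mgrp G) \<rho>M \<and> faithful_action R (Ngrp G) \<rho>N \<and>
     (\<forall>r \<in> carrier R. \<forall>x \<in> carrier (Mgrp G). \<forall>y \<in> carrier (Mgrp G).
        fcomm G (\<rho>M r x) y = \<rho>N r (fcomm G x y) \<and>
        fcomm G x (\<rho>M r y) = \<rho>N r (fcomm G x y))"

text \<open>The maximal ring of scalars of G is \<int>: the integers (acting by powers)
  form a ring of scalars, and (identified with its image in End(M)) every ring
  of scalars consists of integer-power maps.  Since a ring of scalars acts
  faithfully on M, it is isomorphic to its image in End(M), which is a ring whose
  elements are functions on M; so it suffices to quantify over rings whose
  carrier type is that of functions on M.\<close>
definition maximal_scalars_is_Z :: "('a, 'b) monoid_scheme \<Rightarrow> bool" where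
  "maximal_scalars_is_Z G \<longleftrightarrow>
     ring_of_scalars G \<Z> (\<lambda>n x. x [^]\<^bsub>Mgrp G\<^esub> (n::int)) (\<lambda>n x. x [^]\<^bsub>Ngrp G\<^esub> (n::int)) \<and>
     (\<forall>(R :: ('a set \<Rightarrow> 'a set) ring) \<rho>M \<rho>N. ring_of_scalars G R \<rho>M \<rho>N \<longrightarrow>
        (\<forall>r \<in> carrier R. \<exists>n::int. \<forall>x \<in> carrier (Mgrp G). \<rho>M r x = x [^]\<^bsub>Mgrp G\<^esub> n))"

end

theory Submission
  imports Defs
begin

definition lin :: "('m,'d) monoid_scheme \<Rightarrow> ('m \<Rightarrow> 'm) \<Rightarrow> ('m \<Rightarrow> 'm) \<Rightarrow> int \<times> int \<Rightarrow> 'm \<Rightarrow> 'm" where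
  "lin A p q ab x = (if x \<in> carrier A then p x [^]\<^bsub>A\<^esub> (fst ab) \<otimes>\<^bsub>A\<^esub> q x [^]\<^bsub>A\<^esub> (snd ab) else x)"

locale projpair = comm_group A for A :: "('m,'d) monoid_scheme" (structure) +
  fixes p q :: "'m \<Rightarrow> 'm"
  assumes p_hom: "p \<in> hom A A" and q_hom: "q \<in> hom A A"
    and pq: "x \<in> carrier A \<Longrightarrow> p x \<otimes> q x = x"
    and pp: "x \<in> carrier A \<Longrightarrow> p (p x) = p x"
    and qq: "x \<in> carrier A \<Longrightarrow> q (q x) = q x"
    and p_q: "x \<in> carrier A \<Longrightarrow> p (q x) = \<one>"
    and q_p: "x \<in> carrier A \<Longrightarrow> q (p x) = \<one>"
begin

lemma p_closed[simp]: "x \<in> carrier A \<Longrightarrow> p x \<in> carrier A"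
  by (rule hom_in_carrier[OF p_hom])
lemma q_closed[simp]: "x \<in> carrier A \<Longrightarrow> q x \<in> carrier A"
  by (rule hom_in_carrier[OF q_hom])
lemma p_mult: "x \<in> carrier A \<Longrightarrow> y \<in> carrier A \<Longrightarrow> p (x \<otimes> y) = p x \<otimes> p y"
  using p_hom by (simp add: hom_mult)
lemma q_mult: "x \<in> carrier A \<Longrightarrow> y \<in> carrier A \<Longrightarrow> q (x \<otimes> y) = q x \<otimes> q y"
  using q_hom by (simp add: hom_mult)
lemma p_pow: "x \<in> carrier A \<Longrightarrow> p (x [^] (n::int)) = p x [^] n"
  by (rule hom_int_pow[OF p_hom _ is_group is_group])
lemma q_pow: "x \<in> carrier A \<Longrightarrow> q (x [^] (n::int)) = q x [^] n"
  by (rule hom_int_pow[OF q_hom _ is_group is_group])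

lemma lin_in: "x \<in> carrier A \<Longrightarrow> lin A p q (a,b) x = p x [^] a \<otimes> q x [^] b"
  by (simp add: lin_def)

lemma lin_closed: "x \<in> carrier A \<Longrightarrow> lin A p q ab x \<in> carrier A"
  by (simp add: lin_def)

lemma lin_hom: "lin A p q ab \<in> hom A A"
proof -
  obtain a b where ab: "ab = (a,b)" by (cases ab)
  show ?thesis unfolding ab
  proof (rule homI)
    fix x assume "x \<in> carrier A" thus "lin A p q (a,b) x \<in> carrier A" by (rule lin_closed)
  next
    fix x y assume x: "x \<in> carrier A" and y: "y \<in> carrier A"
    show "lin A p q (a,b) (x \<otimes> y) = lin A p q (a,b) x \<otimes> lin A p q (a,b) y"
    proof -
      have "lin A p q (a,b) (x \<otimes> y) = (p x \<otimes> p y) [^] a \<otimes> (q x \<otimes> q y) [^] b"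
        using x y by (simp add: lin_in p_mult q_mult)
      also have "\<dots> = (p x [^] a \<otimes> p y [^] a) \<otimes> (q x [^] b \<otimes> q y [^] b)"
        using x y by (simp only: int_pow_distrib p_closed q_closed)
      also have "\<dots> = (p x [^] a \<otimes> q x [^] b) \<otimes> (p y [^] a \<otimes> q y [^] b)"
        using x y by (simp add: m_ac)
      finally show ?thesis using x y by (simp add: lin_in)
    qed
  qed
qed

lemma lin_11: "x \<in> carrier A \<Longrightarrow> lin A p q (1,1) x = x"
  by (simp add: lin_in pq)

lemma lin_add: "x \<in> carrier A \<Longrightarrow> lin A p q (i+k,j+l) x = lin A p q (i,j) x \<otimes> lin A p q (k,l) x"
proof -
  assume x: "x \<in> carrier A"
  have "lin A p q (i+k,j+l) x = (p x [^] i \<otimes> p x [^] k) \<otimes> (q x [^] j \<otimes> q x [^] l)"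
    using x by (simp add: lin_in int_pow_mult)
  also have "\<dots> = (p x [^] i \<otimes> q x [^] j) \<otimes> (p x [^] k \<otimes> q x [^] l)"
    using x by (simp add: m_ac)
  finally show ?thesis using x by (simp add: lin_in)
qed

lemma lin_mult: "x \<in> carrier A \<Longrightarrow> lin A p q (i*k,j*l) x = lin A p q (i,j) (lin A p q (k,l) x)"
proof -
  assume x: "x \<in> carrier A"
  let ?y = "p x [^] k \<otimes> q x [^] l"
  have y: "?y \<in> carrier A" using x by simp
  have py: "p ?y = p x [^] k" using x by (simp add: p_mult p_pow pp p_q)
  have qy: "q ?y = q x [^] l" using x by (simp add: q_mult q_pow qq q_p)
  have "lin A p q (i,j) (lin A p q (k,l) x) = (p x [^] k) [^] i \<otimes> (q x [^] l) [^] j"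
    using x y py qy by (simp add: lin_in)
  also have "\<dots> = p x [^] (i*k) \<otimes> q x [^] (j*l)"
    using x by (simp add: int_pow_pow mult.commute)
  finally show ?thesis using x by (simp add: lin_in)
qed

lemma lin_fixp: "x \<in> carrier A \<Longrightarrow> p x = x \<Longrightarrow> lin A p q (a,b) x = x [^] a"
proof -
  assume x: "x \<in> carrier A" and px: "p x = x"
  have "q x = \<one>" using q_p[OF x] px by simp
  thus ?thesis using x px by (simp add: lin_in)
qed

lemma lin_fixq: "x \<in> carrier A \<Longrightarrow> q x = x \<Longrightarrow> lin A p q (a,b) x = x [^] b"
proof -
  assume x: "x \<in> carrier A" and px: "q x = x"
  have "p x = \<one>" using p_q[OF x] px by simp
  thus ?thesis using x px by (simp add: lin_in)
qed

lemma nontors_eq: "x \<in> carrier A \<Longrightarrow> (\<forall>n::int. x [^] n = \<one> \<longrightarrow> n = 0) \<Longrightarrow> x [^] (a::int) = x [^] b \<Longrightarrow> a = b"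
proof -
  assume x: "x \<in> carrier A" and nt: "\<forall>n::int. x [^] n = \<one> \<longrightarrow> n = 0" and e: "x [^] a = x [^] b"
  have "x [^] (a - b) = x [^] a \<otimes> inv (x [^] b)" using x by (rule int_pow_diff)
  also have "\<dots> = \<one>" using e x by simp
  finally have "a - b = 0" using nt by blast
  thus "a = b" by simp
qed

end

definition pmul :: "(int \<times> int \<Rightarrow> 'r) \<Rightarrow> 'r \<Rightarrow> 'r \<Rightarrow> 'r" where
  "pmul e r s = e (fst (inv_into UNIV e r) * fst (inv_into UNIV e s), snd (inv_into UNIV e r) * snd (inv_into UNIV e s))"

definition padd :: "(int \<times> int \<Rightarrow> 'r) \<Rightarrow> 'r \<Rightarrow> 'r \<Rightarrow> 'r" where
  "padd e r s = e (fst (inv_into UNIV e r) + fst (inv_into UNIV e s), snd (inv_into UNIV e r) + snd (inv_into UNIV e s))"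

definition Rof :: "(int \<times> int \<Rightarrow> 'r) \<Rightarrow> 'r ring" where
  "Rof e = \<lparr>carrier = range e, monoid.mult = pmul e, one = e (1,1), ring.zero = e (0,0), ring.add = padd e\<rparr>"

lemma Rof_simps:
  "carrier (Rof e) = range e"
  "inj e \<Longrightarrow> e (a1,b1) \<otimes>\<^bsub>Rof e\<^esub> e (a2,b2) = e (a1*a2, b1*b2)"
  "inj e \<Longrightarrow> e (a1,b1) \<oplus>\<^bsub>Rof e\<^esub> e (a2,b2) = e (a1+a2, b1+b2)"
  "\<one>\<^bsub>Rof e\<^esub> = e (1,1)"
  "\<zero>\<^bsub>Rof e\<^esub> = e (0,0)"
  by (simp_all add: Rof_def pmul_def padd_def)

lemma Rof_cring:
  assumes inj: "inj e" shows "cring (Rof e)"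
proof (rule cringI)
  show "abelian_group (Rof e)"
  proof (rule abelian_groupI)
    fix x y assume "x \<in> carrier (Rof e)" "y \<in> carrier (Rof e)"
    then obtain a1 b1 a2 b2 where "x = e (a1,b1)" "y = e (a2,b2)" by (auto simp: Rof_simps)
    thus "x \<oplus>\<^bsub>Rof e\<^esub> y \<in> carrier (Rof e)" "x \<oplus>\<^bsub>Rof e\<^esub> y = y \<oplus>\<^bsub>Rof e\<^esub> x"
      by (simp_all add: Rof_simps inj add.commute)
  next
    show "\<zero>\<^bsub>Rof e\<^esub> \<in> carrier (Rof e)" by (simp add: Rof_simps)
  next
    fix x y z assume "x \<in> carrier (Rof e)" "y \<in> carrier (Rof e)" "z \<in> carrier (Rof e)"
    then obtain a1 b1 a2 b2 a3 b3 where "x = e (a1,b1)" "y = e (a2,b2)" "z = e (a3,b3)" by (auto simp: Rof_simps)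
    thus "x \<oplus>\<^bsub>Rof e\<^esub> y \<oplus>\<^bsub>Rof e\<^esub> z = x \<oplus>\<^bsub>Rof e\<^esub> (y \<oplus>\<^bsub>Rof e\<^esub> z)"
      by (simp add: Rof_simps inj add.assoc)
  next
    fix x assume "x \<in> carrier (Rof e)"
    then obtain a1 b1 where x: "x = e (a1,b1)" by (auto simp: Rof_simps)
    thus "\<zero>\<^bsub>Rof e\<^esub> \<oplus>\<^bsub>Rof e\<^esub> x = x" by (simp add: Rof_simps inj)
    have "e (-a1,-b1) \<oplus>\<^bsub>Rof e\<^esub> x = \<zero>\<^bsub>Rof e\<^esub>" using x by (simp add: Rof_simps inj)
    thus "\<exists>y\<in>carrier (Rof e). y \<oplus>\<^bsub>Rof e\<^esub> x = \<zero>\<^bsub>Rof e\<^esub>" by (auto simp: Rof_simps)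
  qed
next
  show "comm_monoid (Rof e)"
  proof (rule comm_monoidI)
    fix x y assume "x \<in> carrier (Rof e)" "y \<in> carrier (Rof e)"
    then obtain a1 b1 a2 b2 where "x = e (a1,b1)" "y = e (a2,b2)" by (auto simp: Rof_simps)
    thus "x \<otimes>\<^bsub>Rof e\<^esub> y \<in> carrier (Rof e)" "x \<otimes>\<^bsub>Rof e\<^esub> y = y \<otimes>\<^bsub>Rof e\<^esub> x"
      by (simp_all add: Rof_simps inj mult.commute)
  next
    show "\<one>\<^bsub>Rof e\<^esub> \<in> carrier (Rof e)" by (simp add: Rof_simps)
  next
    fix x y z assume "x \<in> carrier (Rof e)" "y \<in> carrier (Rof e)" "z \<in> carrier (Rof e)"
    then obtain a1 b1 a2 b2 a3 b3 where "x = e (a1,b1)" "y = e (a2,b2)" "z = e (a3,b3)" by (auto simp: Rof_simps)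
    thus "x \<otimes>\<^bsub>Rof e\<^esub> y \<otimes>\<^bsub>Rof e\<^esub> z = x \<otimes>\<^bsub>Rof e\<^esub> (y \<otimes>\<^bsub>Rof e\<^esub> z)"
      by (simp add: Rof_simps inj mult.assoc)
  next
    fix x assume "x \<in> carrier (Rof e)"
    then obtain a1 b1 where x: "x = e (a1,b1)" by (auto simp: Rof_simps)
    thus "\<one>\<^bsub>Rof e\<^esub> \<otimes>\<^bsub>Rof e\<^esub> x = x" by (simp add: Rof_simps inj)
  qed
next
  fix x y z assume "x \<in> carrier (Rof e)" "y \<in> carrier (Rof e)" "z \<in> carrier (Rof e)"
  then obtain a1 b1 a2 b2 a3 b3 where "x = e (a1,b1)" "y = e (a2,b2)" "z = e (a3,b3)" by (auto simp: Rof_simps)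
  thus "(x \<oplus>\<^bsub>Rof e\<^esub> y) \<otimes>\<^bsub>Rof e\<^esub> z = x \<otimes>\<^bsub>Rof e\<^esub> z \<oplus>\<^bsub>Rof e\<^esub> y \<otimes>\<^bsub>Rof e\<^esub> z"
    by (simp add: Rof_simps inj distrib_right)
qed

lemma abstract_contra:
  fixes M :: "('m, 'x) monoid_scheme" and N :: "('n, 'y) monoid_scheme" and f :: "'m \<Rightarrow> 'm \<Rightarrow> 'n"
  assumes PM: "projpair M pH pK" and PN: "projpair N qH qK"
  and fhom1: "\<And>y. y \<in> carrier M \<Longrightarrow> (\<lambda>x. f x y) \<in> hom M N"
  and fH1: "\<And>x y. x \<in> carrier M \<Longrightarrow> y \<in> carrier M \<Longrightarrow> f (pH x) y = qH (f x y)"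
  and fK1: "\<And>x y. x \<in> carrier M \<Longrightarrow> y \<in> carrier M \<Longrightarrow> f (pK x) y = qK (f x y)"
  and fhom2: "\<And>x. x \<in> carrier M \<Longrightarrow> (\<lambda>y. f x y) \<in> hom M N"
  and fH2: "\<And>x y. x \<in> carrier M \<Longrightarrow> y \<in> carrier M \<Longrightarrow> f x (pH y) = qH (f x y)"
  and fK2: "\<And>x y. x \<in> carrier M \<Longrightarrow> y \<in> carrier M \<Longrightarrow> f x (pK y) = qK (f x y)"
  and xH: "xH \<in> carrier M" "pH xH = xH" "\<forall>n::int. xH [^]\<^bsub>M\<^esub> n = \<one>\<^bsub>M\<^esub> \<longrightarrow> n = 0"
  and xK: "xK \<in> carrier M" "pK xK = xK" "\<forall>n::int. xK [^]\<^bsub>M\<^esub> n = \<one>\<^bsub>M\<^esub> \<longrightarrow> n = 0"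
  and cH: "cH \<in> carrier N" "qH cH = cH" "\<forall>n::int. cH [^]\<^bsub>N\<^esub> n = \<one>\<^bsub>N\<^esub> \<longrightarrow> n = 0"
  and cK: "cK \<in> carrier N" "qK cK = cK" "\<forall>n::int. cK [^]\<^bsub>N\<^esub> n = \<one>\<^bsub>N\<^esub> \<longrightarrow> n = 0"
  and maxZ: "\<forall>(R :: ('m \<Rightarrow> 'm) ring) \<rho>M \<rho>N. cring R \<and> faithful_action R M \<rho>M \<and> faithful_action R N \<rho>N \<and>
     (\<forall>r \<in> carrier R. \<forall>x \<in> carrier M. \<forall>y \<in> carrier M.
        f (\<rho>M r x) y = \<rho>N r (f x y) \<and> f x (\<rho>M r y) = \<rho>N r (f x y)) \<longrightarrow>
     (\<forall>r \<in> carrier R. \<exists>n::int. \<forall>x \<in> carrier M. \<rho>M r x = x [^]\<^bsub>M\<^esub> n)"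
  shows False
proof -
  interpret M: projpair M pH pK by (rule PM)
  interpret N: projpair N qH qK by (rule PN)
  define e where "e = lin M pH pK"
  have inj: "inj e"
  proof (rule injI)
    fix u v assume euv: "e u = e v"
    obtain a1 b1 where u: "u = (a1,b1)" by (cases u)
    obtain a2 b2 where v: "v = (a2,b2)" by (cases v)
    have "e u xH = e v xH" using euv by simp
    hence "xH [^]\<^bsub>M\<^esub> a1 = xH [^]\<^bsub>M\<^esub> a2"
      using xH by (simp add: e_def u v M.lin_fixp)
    hence 1: "a1 = a2" by (rule M.nontors_eq[OF xH(1) xH(3)])
    have "e u xK = e v xK" using euv by simp
    hence "xK [^]\<^bsub>M\<^esub> b1 = xK [^]\<^bsub>M\<^esub> b2"
      using xK by (simp add: e_def u v M.lin_fixq)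
    hence 2: "b1 = b2" by (rule M.nontors_eq[OF xK(1) xK(3)])
    show "u = v" using 1 2 u v by simp
  qed
  define R where "R = Rof e"
  define \<rho>M :: "('m \<Rightarrow> 'm) \<Rightarrow> 'm \<Rightarrow> 'm" where "\<rho>M = (\<lambda>r x. r x)"
  define \<rho>N where "\<rho>N = (\<lambda>r. lin N qH qK (inv_into UNIV e r))"
  have rN: "\<rho>N (e ab) = lin N qH qK ab" for ab
    using inj by (simp add: \<rho>N_def)
  have carR: "carrier R = range e" by (simp add: R_def Rof_simps)
  have cr: "cring R" unfolding R_def by (rule Rof_cring[OF inj])
  have fM: "faithful_action R M \<rho>M"
    unfolding faithful_action_def endo_action_def
  proof (intro conjI ballI allI impI)
    fix r assume "r \<in> carrier R"
    then obtain ab where "r = e ab" using carR by auto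
    thus "\<rho>M r \<in> hom M M" by (simp add: \<rho>M_def e_def M.lin_hom)
  next
    fix x assume "x \<in> carrier M"
    thus "\<rho>M \<one>\<^bsub>R\<^esub> x = x" by (simp add: \<rho>M_def R_def Rof_simps e_def M.lin_11)
  next
    fix r s x assume "r \<in> carrier R" "s \<in> carrier R" "x \<in> carrier M"
    then obtain a1 b1 a2 b2 where rs: "r = e (a1,b1)" "s = e (a2,b2)" using carR by auto
    show "\<rho>M (r \<oplus>\<^bsub>R\<^esub> s) x = \<rho>M r x \<otimes>\<^bsub>M\<^esub> \<rho>M s x"
      using rs \<open>x \<in> carrier M\<close> inj by (simp add: \<rho>M_def R_def Rof_simps e_def M.lin_add)
    show "\<rho>M (r \<otimes>\<^bsub>R\<^esub> s) x = \<rho>M r (\<rho>M s x)"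
      using rs \<open>x \<in> carrier M\<close> inj by (simp add: \<rho>M_def R_def Rof_simps e_def M.lin_mult)
  next
    fix r s assume "r \<in> carrier R" "s \<in> carrier R" and eq: "\<forall>x\<in>carrier M. \<rho>M r x = \<rho>M s x"
    then obtain a1 b1 a2 b2 where rs: "r = e (a1,b1)" "s = e (a2,b2)" using carR by auto
    show "r = s"
    proof
      fix x show "r x = s x"
        using eq rs by (cases "x \<in> carrier M") (auto simp: \<rho>M_def e_def lin_def)
    qed
  qed
  have fN: "faithful_action R N \<rho>N"
    unfolding faithful_action_def endo_action_def
  proof (intro conjI ballI allI impI)
    fix r assume "r \<in> carrier R"
    then obtain ab where "r = e ab" using carR by auto
    thus "\<rho>N r \<in> hom N N" by (simp add: rN N.lin_hom)
  next
    fix x assume "x \<in> carrier N"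
    thus "\<rho>N \<one>\<^bsub>R\<^esub> x = x" by (simp add: rN R_def Rof_simps N.lin_11)
  next
    fix r s x assume "r \<in> carrier R" "s \<in> carrier R" "x \<in> carrier N"
    then obtain a1 b1 a2 b2 where rs: "r = e (a1,b1)" "s = e (a2,b2)" using carR by auto
    show "\<rho>N (r \<oplus>\<^bsub>R\<^esub> s) x = \<rho>N r x \<otimes>\<^bsub>N\<^esub> \<rho>N s x"
      using rs \<open>x \<in> carrier N\<close> inj by (simp add: rN R_def Rof_simps N.lin_add)
    show "\<rho>N (r \<otimes>\<^bsub>R\<^esub> s) x = \<rho>N r (\<rho>N s x)"
      using rs \<open>x \<in> carrier N\<close> inj by (simp add: rN R_def Rof_simps N.lin_mult)
  next
    fix r s assume "r \<in> carrier R" "s \<in> carrier R" and eq: "\<forall>x\<in>carrier N. \<rho>N r x = \<rho>N s x"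
    then obtain a1 b1 a2 b2 where rs: "r = e (a1,b1)" "s = e (a2,b2)" using carR by auto
    have "cH [^]\<^bsub>N\<^esub> a1 = cH [^]\<^bsub>N\<^esub> a2"
      using eq[rule_format, OF cH(1)] rs cH N.lin_fixp by (simp add: rN)
    hence 1: "a1 = a2" by (rule N.nontors_eq[OF cH(1) cH(3)])
    have "cK [^]\<^bsub>N\<^esub> b1 = cK [^]\<^bsub>N\<^esub> b2"
      using eq[rule_format, OF cK(1)] rs cK N.lin_fixq by (simp add: rN)
    hence 2: "b1 = b2" by (rule N.nontors_eq[OF cK(1) cK(3)])
    show "r = s" using rs 1 2 by simp
  qed
  have compat: "\<forall>r \<in> carrier R. \<forall>x \<in> carrier M. \<forall>y \<in> carrier M.
        f (\<rho>M r x) y = \<rho>N r (f x y) \<and> f x (\<rho>M r y) = \<rho>N r (f x y)"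
  proof (intro ballI conjI)
    fix r x y assume r: "r \<in> carrier R" and x: "x \<in> carrier M" and y: "y \<in> carrier M"
    then obtain a b where rab: "r = e (a,b)" using carR by auto
    have fxy: "f x y \<in> carrier N" using hom_in_carrier[OF fhom1[OF y] x] by simp
    have "f (\<rho>M r x) y = f (pH x [^]\<^bsub>M\<^esub> a \<otimes>\<^bsub>M\<^esub> pK x [^]\<^bsub>M\<^esub> b) y"
      using rab x by (simp add: \<rho>M_def e_def M.lin_in)
    also have "\<dots> = f (pH x) y [^]\<^bsub>N\<^esub> a \<otimes>\<^bsub>N\<^esub> f (pK x) y [^]\<^bsub>N\<^esub> b"
      using x hom_mult[OF fhom1[OF y]] hom_int_pow[OF fhom1[OF y] _ M.is_group N.is_group]
      by simp
    also have "\<dots> = \<rho>N r (f x y)"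
      using x y fxy rab by (simp add: fH1 fK1 rN N.lin_in)
    finally show "f (\<rho>M r x) y = \<rho>N r (f x y)" .
    have "f x (\<rho>M r y) = f x (pH y [^]\<^bsub>M\<^esub> a \<otimes>\<^bsub>M\<^esub> pK y [^]\<^bsub>M\<^esub> b)"
      using rab y by (simp add: \<rho>M_def e_def M.lin_in)
    also have "\<dots> = f x (pH y) [^]\<^bsub>N\<^esub> a \<otimes>\<^bsub>N\<^esub> f x (pK y) [^]\<^bsub>N\<^esub> b"
      using y hom_mult[OF fhom2[OF x]] hom_int_pow[OF fhom2[OF x] _ M.is_group N.is_group]
      by simp
    also have "\<dots> = \<rho>N r (f x y)"
      using x y fxy rab by (simp add: fH2 fK2 rN N.lin_in)
    finally show "f x (\<rho>M r y) = \<rho>N r (f x y)" .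
  qed
  have "\<forall>r \<in> carrier R. \<exists>n::int. \<forall>x \<in> carrier M. \<rho>M r x = x [^]\<^bsub>M\<^esub> n"
    using maxZ[rule_format, OF conjI[OF cr conjI[OF fM conjI[OF fN compat]]]] by blast
  moreover have "e (1,0) \<in> carrier R" using carR by simp
  ultimately have "\<exists>n::int. \<forall>x \<in> carrier M. e (1,0) x = x [^]\<^bsub>M\<^esub> n"
    unfolding \<rho>M_def by (rule bspec)
  then obtain n :: int where n: "\<forall>x \<in> carrier M. e (1,0) x = x [^]\<^bsub>M\<^esub> n" by blast
  have "e (1,0) xH = xH [^]\<^bsub>M\<^esub> n" using n xH by blast
  hence "xH [^]\<^bsub>M\<^esub> (1::int) = xH [^]\<^bsub>M\<^esub> n"
    using xH by (simp add: e_def M.lin_fixp)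
  hence "1 = n" by (rule M.nontors_eq[OF xH(1) xH(3)])
  moreover have "e (1,0) xK = xK [^]\<^bsub>M\<^esub> n" using n xK by blast
  hence "xK [^]\<^bsub>M\<^esub> (0::int) = xK [^]\<^bsub>M\<^esub> n"
    using xK by (simp add: e_def M.lin_fixq del: int_pow_0)
  hence "0 = n" by (rule M.nontors_eq[OF xK(1) xK(3)])
  ultimately show False by simp
qed

lemma (in group) comm_closed[simp]: "g \<in> carrier G \<Longrightarrow> h \<in> carrier G \<Longrightarrow> comm G g h \<in> carrier G"
  by (simp add: comm_def)

lemma (in group) comm_alt: "g \<in> carrier G \<Longrightarrow> h \<in> carrier G \<Longrightarrow> comm G g h = inv (h \<otimes> g) \<otimes> (g \<otimes> h)"
  by (simp add: comm_def inv_mult_group m_assoc)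

lemma (in group) ghc: "g \<in> carrier G \<Longrightarrow> h \<in> carrier G \<Longrightarrow> g \<otimes> h = (h \<otimes> g) \<otimes> comm G g h"
  by (simp add: comm_alt inv_solve_left[symmetric])

lemma (in group) comm_one_iff: "g \<in> carrier G \<Longrightarrow> h \<in> carrier G \<Longrightarrow> comm G g h = \<one> \<longleftrightarrow> g \<otimes> h = h \<otimes> g"
proof -
  assume g: "g \<in> carrier G" and h: "h \<in> carrier G"
  have e: "g \<otimes> h = (h \<otimes> g) \<otimes> comm G g h" using g h by (rule ghc)
  show ?thesis
  proof
    assume "comm G g h = \<one>" thus "g \<otimes> h = h \<otimes> g" using e g h by simp
  next
    assume "g \<otimes> h = h \<otimes> g"
    hence 1: "h \<otimes> g = (h \<otimes> g) \<otimes> comm G g h" using e by simp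
    have "(h \<otimes> g = (h \<otimes> g) \<otimes> comm G g h) = (comm G g h = \<one>)"
      using g h by (intro l_cancel_one') simp_all
    thus "comm G g h = \<one>" using 1 by blast
  qed
qed

lemma (in group) tf_int:
  assumes tf: "torsion_free G" and g: "g \<in> carrier G" "g \<noteq> \<one>" and e: "g [^] (n::int) = \<one>"
  shows "n = 0"
proof -
  have pos: False if m: "m > 0" and gm: "g [^] (m::int) = \<one>" for m
  proof -
    have "g [^] (nat m) = g [^] (int (nat m))" by (simp only: int_pow_int)
    also have "int (nat m) = m" using m by simp
    finally have "g [^] (nat m) = \<one>" using gm by simp
    moreover have "nat m > 0" using m by simp
    ultimately have "g = \<one>"
      using tf[unfolded torsion_free_def, rule_format, OF g(1), of "nat m"] by simp
    thus False using g(2) by simp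
  qed
  show "n = 0"
  proof (rule ccontr)
    assume n: "n \<noteq> 0"
    show False
    proof (cases "n > 0")
      case True thus False using pos e by blast
    next
      case False
      hence "- n > 0" using n by simp
      moreover have "g [^] (- n) = \<one>" using int_pow_neg[OF g(1), of n] e by simp
      ultimately show False using pos by blast
    qed
  qed
qed

locale dprod = group G for G (structure) +
  fixes H K
  assumes nH: "H \<lhd> G" and nK: "K \<lhd> G" and HK1: "H \<inter> K = {\<one>}" and HKG: "H <#> K = carrier G"
    and nil2: "comm_subgroup G \<subseteq> grp_center G"
begin

lemma sH: "subgroup H G" using nH by (rule normal_imp_subgroup)
lemma sK: "subgroup K G" using nK by (rule normal_imp_subgroup)
lemma H_car: "h \<in> H \<Longrightarrow> h \<in> carrier G" by (rule subgroup.mem_carrier[OF sH])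
lemma K_car: "k \<in> K \<Longrightarrow> k \<in> carrier G" by (rule subgroup.mem_carrier[OF sK])

lemma hk_comm:
  assumes h: "h \<in> H" and k: "k \<in> K" shows "h \<otimes> k = k \<otimes> h"
proof -
  have hc: "h \<in> carrier G" and kc: "k \<in> carrier G" using h k H_car K_car by auto
  have c1: "inv h \<otimes> (inv k \<otimes> h \<otimes> k) \<in> H"
    using normal.inv_op_closed1[OF nH kc h] h sH by (simp add: subgroup.m_closed subgroup.m_inv_closed)
  have c2: "inv h \<otimes> inv k \<otimes> h \<otimes> k \<in> K"
  proof -
    have "inv h \<otimes> inv k \<otimes> h \<in> K"
      using normal.inv_op_closed1[OF nK hc] k sK by (simp add: subgroup.m_inv_closed)
    thus ?thesis using k sK by (simp add: subgroup.m_closed)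
  qed
  have "comm G h k \<in> H \<inter> K" using c1 c2 hc kc by (simp add: comm_def m_assoc)
  hence "comm G h k = \<one>" using HK1 by (metis singletonD)
  thus ?thesis using comm_one_iff[OF hc kc] by simp
qed

lemma decomp_ex: "g \<in> carrier G \<Longrightarrow> \<exists>h\<in>H. \<exists>k\<in>K. g = h \<otimes> k"
proof -
  assume "g \<in> carrier G"
  hence "g \<in> H <#> K" using HKG by simp
  thus ?thesis unfolding set_mult_def by blast
qed

lemma decomp_uniq:
  assumes "h \<in> H" "h' \<in> H" "k \<in> K" "k' \<in> K" "h \<otimes> k = h' \<otimes> k'"
  shows "h = h' \<and> k = k'"
proof -
  have c: "h \<in> carrier G" "h' \<in> carrier G" "k \<in> carrier G" "k' \<in> carrier G"
    using assms H_car K_car by auto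
  have e: "inv h' \<otimes> h = k' \<otimes> inv k"
  proof -
    have "h = h' \<otimes> k' \<otimes> inv k" using assms(5) c by (simp add: inv_solve_right)
    thus ?thesis using c by (simp add: m_assoc[symmetric])
  qed
  have "inv h' \<otimes> h \<in> H" using assms sH by (simp add: subgroup.m_closed subgroup.m_inv_closed)
  moreover have "k' \<otimes> inv k \<in> K" using assms sK by (simp add: subgroup.m_closed subgroup.m_inv_closed)
  ultimately have "inv h' \<otimes> h \<in> H \<inter> K" using e by simp
  hence "inv h' \<otimes> h = \<one>" using HK1 by (metis singletonD)
  hence hh: "h = h'" using c inv_solve_left'[of "\<one>" h' h] by simp
  hence "k = k'" using assms(5) c by simp
  thus ?thesis using hh by simp
qed

definition eH where "eH g = (THE h. h \<in> H \<and> (\<exists>k\<in>K. g = h \<otimes> k))"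
definition eK where "eK g = (THE k. k \<in> K \<and> (\<exists>h\<in>H. g = h \<otimes> k))"

lemma e_eq:
  assumes h: "h \<in> H" and k: "k \<in> K" shows "eH (h \<otimes> k) = h" "eK (h \<otimes> k) = k"
proof -
  show "eH (h \<otimes> k) = h" unfolding eH_def
  proof (rule the_equality)
    show "h \<in> H \<and> (\<exists>k'\<in>K. h \<otimes> k = h \<otimes> k')" using h k by blast
  next
    fix h' assume "h' \<in> H \<and> (\<exists>k'\<in>K. h \<otimes> k = h' \<otimes> k')"
    then obtain k' where "h' \<in> H" "k' \<in> K" "h \<otimes> k = h' \<otimes> k'" by blast
    thus "h' = h" using decomp_uniq[OF h _ k] by simp
  qed
  show "eK (h \<otimes> k) = k" unfolding eK_def
  proof (rule the_equality)
    show "k \<in> K \<and> (\<exists>h'\<in>H. h \<otimes> k = h' \<otimes> k)" using h k by blast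
  next
    fix k' assume "k' \<in> K \<and> (\<exists>h'\<in>H. h \<otimes> k = h' \<otimes> k')"
    then obtain h' where "k' \<in> K" "h' \<in> H" "h \<otimes> k = h' \<otimes> k'" by blast
    thus "k' = k" using decomp_uniq[OF h _ k] by simp
  qed
qed

lemma e_props:
  assumes g: "g \<in> carrier G" shows "eH g \<in> H" "eK g \<in> K" "g = eH g \<otimes> eK g"
proof -
  obtain h k where hk: "h \<in> H" "k \<in> K" "g = h \<otimes> k" using decomp_ex[OF g] by blast
  show "eH g \<in> H" "eK g \<in> K" "g = eH g \<otimes> eK g" using e_eq[OF hk(1,2)] hk by simp_all
qed

lemma eH_car[simp]: "g \<in> carrier G \<Longrightarrow> eH g \<in> carrier G" by (rule H_car[OF e_props(1)])
lemma eK_car[simp]: "g \<in> carrier G \<Longrightarrow> eK g \<in> carrier G" by (rule K_car[OF e_props(2)])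

lemma eH_H: "h \<in> H \<Longrightarrow> eH h = h" and eK_H: "h \<in> H \<Longrightarrow> eK h = \<one>"
  using e_eq[of h \<one>] subgroup.one_closed[OF sK] H_car by auto
lemma eH_K: "k \<in> K \<Longrightarrow> eH k = \<one>" and eK_K: "k \<in> K \<Longrightarrow> eK k = k"
  using e_eq[of \<one> k] subgroup.one_closed[OF sH] K_car by auto

lemma e_mult:
  assumes g: "g \<in> carrier G" and g': "g' \<in> carrier G"
  shows "eH (g \<otimes> g') = eH g \<otimes> eH g'" "eK (g \<otimes> g') = eK g \<otimes> eK g'"
proof -
  obtain h k where hk: "h \<in> H" "k \<in> K" and gd: "g = h \<otimes> k" using decomp_ex[OF g] by blast
  obtain h' k' where hk': "h' \<in> H" "k' \<in> K" and gd': "g' = h' \<otimes> k'" using decomp_ex[OF g'] by blast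
  have c: "h \<in> carrier G" "k \<in> carrier G" "h' \<in> carrier G" "k' \<in> carrier G"
    using hk hk' H_car K_car by auto
  have kh: "k \<otimes> h' = h' \<otimes> k" using hk_comm[OF hk'(1) hk(2)] by simp
  have "g \<otimes> g' = h \<otimes> (k \<otimes> h') \<otimes> k'" using c by (simp add: gd gd' m_assoc)
  also have "\<dots> = (h \<otimes> h') \<otimes> (k \<otimes> k')" using c by (simp add: kh m_assoc)
  finally have e: "g \<otimes> g' = (h \<otimes> h') \<otimes> (k \<otimes> k')" .
  have "h \<otimes> h' \<in> H" using hk hk' sH by (simp add: subgroup.m_closed)
  moreover have "k \<otimes> k' \<in> K" using hk hk' sK by (simp add: subgroup.m_closed)
  ultimately show "eH (g \<otimes> g') = eH g \<otimes> eH g'" "eK (g \<otimes> g') = eK g \<otimes> eK g'"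
    unfolding e using e_eq hk hk' gd gd' by simp_all
qed

lemma eH_hom: "eH \<in> hom G G" by (rule homI) (simp_all add: e_mult)
lemma eK_hom: "eK \<in> hom G G" by (rule homI) (simp_all add: e_mult)

lemma eH_inv: "g \<in> carrier G \<Longrightarrow> eH (inv g) = inv (eH g)"
  using group_hom.hom_inv[of G G eH] eH_hom is_group
  by (simp add: group_hom_def group_hom_axioms_def)
lemma eK_inv: "g \<in> carrier G \<Longrightarrow> eK (inv g) = inv (eK g)"
  using group_hom.hom_inv[of G G eK] eK_hom is_group
  by (simp add: group_hom_def group_hom_axioms_def)

lemma eH_comm: "g \<in> carrier G \<Longrightarrow> h \<in> carrier G \<Longrightarrow> eH (comm G g h) = comm G (eH g) (eH h)"
  by (simp add: comm_def e_mult eH_inv)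
lemma eK_comm: "g \<in> carrier G \<Longrightarrow> h \<in> carrier G \<Longrightarrow> eK (comm G g h) = comm G (eK g) (eK h)"
  by (simp add: comm_def e_mult eK_inv)

lemma eHH: "g \<in> carrier G \<Longrightarrow> eH (eH g) = eH g" by (rule eH_H[OF e_props(1)])
lemma eKK: "g \<in> carrier G \<Longrightarrow> eK (eK g) = eK g" by (rule eK_K[OF e_props(2)])
lemma eHK: "g \<in> carrier G \<Longrightarrow> eH (eK g) = \<one>" by (rule eH_K[OF e_props(2)])
lemma eKH: "g \<in> carrier G \<Longrightarrow> eK (eH g) = \<one>" by (rule eK_H[OF e_props(1)])

end

context dprod
begin

abbreviation "Zc \<equiv> grp_center G"
abbreviation "Gd \<equiv> comm_subgroup G"

lemma Z_car: "Zc \<subseteq> carrier G" unfolding grp_center_def by auto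
lemma Z_carI: "z \<in> Zc \<Longrightarrow> z \<in> carrier G" unfolding grp_center_def by auto
lemma Z_comm: "z \<in> Zc \<Longrightarrow> g \<in> carrier G \<Longrightarrow> z \<otimes> g = g \<otimes> z" unfolding grp_center_def by auto
lemma Z_memI: "z \<in> carrier G \<Longrightarrow> (\<And>g. g \<in> carrier G \<Longrightarrow> z \<otimes> g = g \<otimes> z) \<Longrightarrow> z \<in> Zc"
  unfolding grp_center_def by auto

lemma Z_inv: assumes z: "z \<in> Zc" shows "inv z \<in> Zc"
proof (rule Z_memI)
  have zc: "z \<in> carrier G" using z by (rule Z_carI)
  show "inv z \<in> carrier G" using zc by simp
  fix g assume g: "g \<in> carrier G"
  have "inv z \<otimes> g = inv z \<otimes> (g \<otimes> z) \<otimes> inv z" using zc g by (simp add: m_assoc)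
  also have "\<dots> = inv z \<otimes> (z \<otimes> g) \<otimes> inv z" using Z_comm[OF z g] by simp
  also have "\<dots> = g \<otimes> inv z" using zc g by (simp add: m_assoc[symmetric])
  finally show "inv z \<otimes> g = g \<otimes> inv z" .
qed

lemma Z_mult: assumes z: "z \<in> Zc" and w: "w \<in> Zc" shows "z \<otimes> w \<in> Zc"
proof (rule Z_memI)
  have zc: "z \<in> carrier G" using z by (rule Z_carI)
  have wc: "w \<in> carrier G" using w by (rule Z_carI)
  show "z \<otimes> w \<in> carrier G" using zc wc by simp
  fix g assume g: "g \<in> carrier G"
  have "z \<otimes> w \<otimes> g = z \<otimes> (g \<otimes> w)" using Z_comm[OF w g] zc wc g by (simp add: m_assoc)
  also have "\<dots> = (z \<otimes> g) \<otimes> w" using zc wc g by (simp add: m_assoc)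
  also have "\<dots> = g \<otimes> (z \<otimes> w)" using Z_comm[OF z g] zc wc g by (simp add: m_assoc)
  finally show "z \<otimes> w \<otimes> g = g \<otimes> (z \<otimes> w)" .
qed

lemma Z_one: "\<one> \<in> Zc" by (rule Z_memI) simp_all

lemma Z_subgroup: "subgroup Zc G"
  by (rule subgroupI) (use Z_car Z_inv Z_mult Z_one in auto)

lemma Z_normal: "Zc \<lhd> G"
proof (rule normal_invI[OF Z_subgroup])
  fix x h assume x: "x \<in> carrier G" and h: "h \<in> Zc"
  have hc: "h \<in> carrier G" using h by (rule Z_carI)
  have "x \<otimes> h \<otimes> inv x = h \<otimes> x \<otimes> inv x" using Z_comm[OF h x] by simp
  also have "\<dots> = h" using x hc by (simp add: m_assoc)
  finally show "x \<otimes> h \<otimes> inv x \<in> Zc" using h by simp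
qed

lemma comm_gens_sub: "{comm G g h | g h. g \<in> carrier G \<and> h \<in> carrier G} \<subseteq> carrier G"
  by auto

lemma Gd_subgroup: "subgroup Gd G"
  unfolding comm_subgroup_def by (rule generate_is_subgroup[OF comm_gens_sub])

lemma comm_in_Gd: "g \<in> carrier G \<Longrightarrow> h \<in> carrier G \<Longrightarrow> comm G g h \<in> Gd"
  unfolding comm_subgroup_def by (rule generate.incl) blast

lemma comm_Z: "g \<in> carrier G \<Longrightarrow> h \<in> carrier G \<Longrightarrow> comm G g h \<in> Zc"
  using comm_in_Gd nil2 by (rule subsetD[rotated])

lemma Gd_car: "c \<in> Gd \<Longrightarrow> c \<in> carrier G" by (rule subgroup.mem_carrier[OF Gd_subgroup])

lemma comm_mult_left:
  assumes g: "g \<in> carrier G" and g': "g' \<in> carrier G" and h: "h \<in> carrier G"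
  shows "comm G (g \<otimes> g') h = comm G g h \<otimes> comm G g' h"
proof -
  define c1 where "c1 = comm G g h"
  define c2 where "c2 = comm G g' h"
  define c12 where "c12 = comm G (g \<otimes> g') h"
  have c1: "c1 \<in> carrier G" "c1 \<in> Zc" using g h comm_Z by (simp_all add: c1_def)
  have c2: "c2 \<in> carrier G" using g' h by (simp add: c2_def)
  have c12: "c12 \<in> carrier G" using g g' h by (simp add: c12_def)
  have e1: "g' \<otimes> h = h \<otimes> g' \<otimes> c2" unfolding c2_def using g' h by (rule ghc)
  have e2: "g \<otimes> h = h \<otimes> g \<otimes> c1" unfolding c1_def using g h by (rule ghc)
  have "g \<otimes> g' \<otimes> h = g \<otimes> (g' \<otimes> h)" using g g' h by (simp add: m_assoc)
  also have "\<dots> = g \<otimes> (h \<otimes> g' \<otimes> c2)" by (simp only: e1)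
  also have "\<dots> = (g \<otimes> h) \<otimes> g' \<otimes> c2" using g g' h c2 by (simp add: m_assoc)
  also have "\<dots> = h \<otimes> g \<otimes> c1 \<otimes> g' \<otimes> c2" by (simp only: e2)
  also have "\<dots> = h \<otimes> g \<otimes> (c1 \<otimes> g') \<otimes> c2" using g g' h c1 c2 by (simp add: m_assoc)
  also have "\<dots> = h \<otimes> g \<otimes> (g' \<otimes> c1) \<otimes> c2" using Z_comm[OF c1(2) g'] by simp
  also have "\<dots> = h \<otimes> (g \<otimes> g') \<otimes> (c1 \<otimes> c2)" using g g' h c1 c2 by (simp add: m_assoc)
  finally have A: "g \<otimes> g' \<otimes> h = h \<otimes> (g \<otimes> g') \<otimes> (c1 \<otimes> c2)" .
  have B: "g \<otimes> g' \<otimes> h = h \<otimes> (g \<otimes> g') \<otimes> c12" unfolding c12_def using g g' h by (intro ghc) simp_all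
  have "h \<otimes> (g \<otimes> g') \<otimes> c12 = h \<otimes> (g \<otimes> g') \<otimes> (c1 \<otimes> c2)" using A B by metis
  hence "c12 = c1 \<otimes> c2" using g g' h c1 c2 c12 by simp
  thus ?thesis by (simp add: c1_def c2_def c12_def)
qed

lemma comm_mult_right:
  assumes g: "g \<in> carrier G" and h: "h \<in> carrier G" and h': "h' \<in> carrier G"
  shows "comm G g (h \<otimes> h') = comm G g h \<otimes> comm G g h'"
proof -
  define c1 where "c1 = comm G g h"
  define c2 where "c2 = comm G g h'"
  define c12 where "c12 = comm G g (h \<otimes> h')"
  have c1: "c1 \<in> carrier G" "c1 \<in> Zc" using g h comm_Z by (simp_all add: c1_def)
  have c2: "c2 \<in> carrier G" "c2 \<in> Zc" using g h' comm_Z by (simp_all add: c2_def)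
  have c12: "c12 \<in> carrier G" using g h h' by (simp add: c12_def)
  have e1: "g \<otimes> h = h \<otimes> g \<otimes> c1" unfolding c1_def using g h by (rule ghc)
  have e2: "g \<otimes> h' = h' \<otimes> g \<otimes> c2" unfolding c2_def using g h' by (rule ghc)
  have "g \<otimes> (h \<otimes> h') = (g \<otimes> h) \<otimes> h'" using g h h' by (simp add: m_assoc)
  also have "\<dots> = h \<otimes> g \<otimes> c1 \<otimes> h'" by (simp only: e1)
  also have "\<dots> = h \<otimes> g \<otimes> (c1 \<otimes> h')" using g h h' c1 by (simp add: m_assoc)
  also have "\<dots> = h \<otimes> g \<otimes> (h' \<otimes> c1)" using Z_comm[OF c1(2) h'] by simp
  also have "\<dots> = h \<otimes> (g \<otimes> h') \<otimes> c1" using g h h' c1 by (simp add: m_assoc)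
  also have "\<dots> = h \<otimes> (h' \<otimes> g \<otimes> c2) \<otimes> c1" by (simp only: e2)
  also have "\<dots> = (h \<otimes> h') \<otimes> g \<otimes> (c2 \<otimes> c1)" using g h h' c1 c2 by (simp add: m_assoc)
  also have "\<dots> = (h \<otimes> h') \<otimes> g \<otimes> (c1 \<otimes> c2)" using Z_comm[OF c2(2) c1(1)] by simp
  finally have A: "g \<otimes> (h \<otimes> h') = (h \<otimes> h') \<otimes> g \<otimes> (c1 \<otimes> c2)" .
  have B: "g \<otimes> (h \<otimes> h') = (h \<otimes> h') \<otimes> g \<otimes> c12" unfolding c12_def using g h h' by (intro ghc) simp_all
  have "(h \<otimes> h') \<otimes> g \<otimes> c12 = (h \<otimes> h') \<otimes> g \<otimes> (c1 \<otimes> c2)" using A B by metis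
  hence "c12 = c1 \<otimes> c2" using g h h' c1 c2 c12 by simp
  thus ?thesis by (simp add: c1_def c2_def c12_def)
qed

lemma comm_Zl: "z \<in> Zc \<Longrightarrow> h \<in> carrier G \<Longrightarrow> comm G z h = \<one>"
  using comm_one_iff[OF Z_carI] Z_comm by simp

lemma comm_Zr: "z \<in> Zc \<Longrightarrow> g \<in> carrier G \<Longrightarrow> comm G g z = \<one>"
  using comm_one_iff[OF _ Z_carI] Z_comm by simp

lemma comm_Z_left: "z \<in> Zc \<Longrightarrow> g \<in> carrier G \<Longrightarrow> h \<in> carrier G \<Longrightarrow> comm G (z \<otimes> g) h = comm G g h"
  by (simp add: comm_mult_left Z_carI comm_Zl)

lemma comm_Z_right: "z \<in> Zc \<Longrightarrow> g \<in> carrier G \<Longrightarrow> h \<in> carrier G \<Longrightarrow> comm G g (z \<otimes> h) = comm G g h"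
  by (simp add: comm_mult_right Z_carI comm_Zr)

lemma comm_hom_left: "h \<in> carrier G \<Longrightarrow> (\<lambda>g. comm G g h) \<in> hom G G"
  by (rule homI) (simp_all add: comm_mult_left)

lemma comm_pow_left: "g \<in> carrier G \<Longrightarrow> h \<in> carrier G \<Longrightarrow> comm G (g [^] (n::int)) h = comm G g h [^] n"
proof -
  assume g: "g \<in> carrier G" and h: "h \<in> carrier G"
  show ?thesis using hom_int_pow[OF comm_hom_left[OF h] g is_group is_group] by simp
qed

end

context dprod
begin

lemma eH_Z: assumes z: "z \<in> Zc" shows "eH z \<in> Zc"
proof (rule Z_memI)
  have zc: "z \<in> carrier G" using z by (rule Z_carI)
  obtain h k where hk: "h \<in> H" "k \<in> K" and zd: "z = h \<otimes> k" using decomp_ex[OF zc] by blast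
  have ez: "eH z = h" using e_eq(1)[OF hk] zd by simp
  have hc: "h \<in> carrier G" and kc: "k \<in> carrier G" using hk H_car K_car by auto
  show "eH z \<in> carrier G" using zc by simp
  fix g assume g: "g \<in> carrier G"
  obtain h' k' where hk': "h' \<in> H" "k' \<in> K" and gd: "g = h' \<otimes> k'" using decomp_ex[OF g] by blast
  have hc': "h' \<in> carrier G" and kc': "k' \<in> carrier G" using hk' H_car K_car by auto
  have "z \<otimes> h' = h' \<otimes> z" using Z_comm[OF z hc'] .
  hence "h \<otimes> k \<otimes> h' = h' \<otimes> (h \<otimes> k)" by (simp add: zd)
  moreover have "h \<otimes> k \<otimes> h' = (h \<otimes> h') \<otimes> k" using hk_comm[OF hk'(1) hk(2)] hc kc hc' by (simp add: m_assoc)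
  moreover have "h' \<otimes> (h \<otimes> k) = (h' \<otimes> h) \<otimes> k" using hc kc hc' by (simp add: m_assoc)
  ultimately have "(h \<otimes> h') \<otimes> k = (h' \<otimes> h) \<otimes> k" by simp
  hence hh: "h \<otimes> h' = h' \<otimes> h" using hc kc hc' by simp
  have "h \<otimes> g = (h \<otimes> h') \<otimes> k'" using hc hc' kc' by (simp add: gd m_assoc)
  also have "\<dots> = h' \<otimes> (h \<otimes> k')" using hc hc' kc' by (simp add: hh m_assoc)
  also have "\<dots> = h' \<otimes> (k' \<otimes> h)" using hk_comm[OF hk(1) hk'(2)] by simp
  also have "\<dots> = g \<otimes> h" using hc hc' kc' by (simp add: gd m_assoc)
  finally show "eH z \<otimes> g = g \<otimes> eH z" by (simp add: ez)
qed

lemma eK_Z: assumes z: "z \<in> Zc" shows "eK z \<in> Zc"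
proof (rule Z_memI)
  have zc: "z \<in> carrier G" using z by (rule Z_carI)
  obtain h k where hk: "h \<in> H" "k \<in> K" and zd: "z = h \<otimes> k" using decomp_ex[OF zc] by blast
  have ez: "eK z = k" using e_eq(2)[OF hk] zd by simp
  have hc: "h \<in> carrier G" and kc: "k \<in> carrier G" using hk H_car K_car by auto
  show "eK z \<in> carrier G" using zc by simp
  fix g assume g: "g \<in> carrier G"
  obtain h' k' where hk': "h' \<in> H" "k' \<in> K" and gd: "g = h' \<otimes> k'" using decomp_ex[OF g] by blast
  have hc': "h' \<in> carrier G" and kc': "k' \<in> carrier G" using hk' H_car K_car by auto
  have "z \<otimes> k' = k' \<otimes> z" using Z_comm[OF z kc'] .
  hence "h \<otimes> k \<otimes> k' = k' \<otimes> (h \<otimes> k)" by (simp add: zd)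
  moreover have "h \<otimes> k \<otimes> k' = h \<otimes> (k \<otimes> k')" using hc kc kc' by (simp add: m_assoc)
  moreover have "k' \<otimes> (h \<otimes> k) = h \<otimes> (k' \<otimes> k)" using hk_comm[OF hk(1) hk'(2)] hc kc kc'
    by (simp add: m_assoc[symmetric])
  ultimately have "h \<otimes> (k \<otimes> k') = h \<otimes> (k' \<otimes> k)" by simp
  hence kk: "k \<otimes> k' = k' \<otimes> k" using hc kc kc' by simp
  have "k \<otimes> g = (k \<otimes> h') \<otimes> k'" using kc hc' kc' by (simp add: gd m_assoc)
  also have "\<dots> = (h' \<otimes> k) \<otimes> k'" using hk_comm[OF hk'(1) hk(2)] by simp
  also have "\<dots> = h' \<otimes> (k' \<otimes> k)" using kc hc' kc' by (simp add: kk m_assoc)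
  also have "\<dots> = g \<otimes> k" using kc hc' kc' by (simp add: gd m_assoc)
  finally show "eK z \<otimes> g = g \<otimes> eK z" by (simp add: ez)
qed

lemma coset_Z: "z \<in> Zc \<Longrightarrow> g \<in> carrier G \<Longrightarrow> Zc #> (z \<otimes> g) = Zc #> g"
  by (rule repr_independence[symmetric]) (simp_all add: rcosI Z_car Z_subgroup)

lemma rep_ex: assumes g: "g \<in> carrier G" shows "\<exists>z\<in>Zc. (SOME a. a \<in> Zc #> g) = z \<otimes> g"
proof -
  have "g \<in> Zc #> g" using g Z_subgroup by (rule rcos_self)
  hence "(SOME a. a \<in> Zc #> g) \<in> Zc #> g" by (rule someI)
  thus ?thesis unfolding r_coset_def by blast
qed

lemma fcomm_eq: assumes g: "g \<in> carrier G" and h: "h \<in> carrier G"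
  shows "fcomm G (Zc #> g) (Zc #> h) = comm G g h"
proof -
  obtain z where z: "z \<in> Zc" "(SOME a. a \<in> Zc #> g) = z \<otimes> g" using rep_ex[OF g] by blast
  obtain w where w: "w \<in> Zc" "(SOME a. a \<in> Zc #> h) = w \<otimes> h" using rep_ex[OF h] by blast
  have "fcomm G (Zc #> g) (Zc #> h) = comm G (z \<otimes> g) (w \<otimes> h)" by (simp add: fcomm_def z w)
  also have "\<dots> = comm G g (w \<otimes> h)" using z w g h Z_carI by (simp add: comm_Z_left)
  also have "\<dots> = comm G g h" using z w g h by (simp add: comm_Z_right)
  finally show ?thesis .
qed

definition pHM :: "'a set \<Rightarrow> 'a set" where "pHM x = Zc #> eH (SOME a. a \<in> x)"
definition pKM :: "'a set \<Rightarrow> 'a set" where "pKM x = Zc #> eK (SOME a. a \<in> x)"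

lemma pHM_eq: assumes g: "g \<in> carrier G" shows "pHM (Zc #> g) = Zc #> eH g"
proof -
  obtain z where z: "z \<in> Zc" "(SOME a. a \<in> Zc #> g) = z \<otimes> g" using rep_ex[OF g] by blast
  have zc: "z \<in> carrier G" using z(1) by (rule Z_carI)
  have "pHM (Zc #> g) = Zc #> (eH z \<otimes> eH g)" by (simp add: pHM_def z e_mult zc g)
  also have "\<dots> = Zc #> eH g" using eH_Z[OF z(1)] g by (simp add: coset_Z)
  finally show ?thesis .
qed

lemma pKM_eq: assumes g: "g \<in> carrier G" shows "pKM (Zc #> g) = Zc #> eK g"
proof -
  obtain z where z: "z \<in> Zc" "(SOME a. a \<in> Zc #> g) = z \<otimes> g" using rep_ex[OF g] by blast
  have zc: "z \<in> carrier G" using z(1) by (rule Z_carI)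
  have "pKM (Zc #> g) = Zc #> (eK z \<otimes> eK g)" by (simp add: pKM_def z e_mult zc g)
  also have "\<dots> = Zc #> eK g" using eK_Z[OF z(1)] g by (simp add: coset_Z)
  finally show ?thesis .
qed

lemma M_carrier: "carrier (Mgrp G) = rcosets Zc" by (simp add: Mgrp_def FactGroup_def)
lemma M_cases: "x \<in> carrier (Mgrp G) \<Longrightarrow> \<exists>g\<in>carrier G. x = Zc #> g"
  unfolding M_carrier RCOSETS_def by blast
lemma M_in: "g \<in> carrier G \<Longrightarrow> Zc #> g \<in> carrier (Mgrp G)"
  unfolding M_carrier by (rule rcosetsI[OF Z_car])
lemma M_mult: "g \<in> carrier G \<Longrightarrow> h \<in> carrier G \<Longrightarrow> (Zc #> g) \<otimes>\<^bsub>Mgrp G\<^esub> (Zc #> h) = Zc #> (g \<otimes> h)"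
  by (simp add: Mgrp_def normal.rcos_sum[OF Z_normal])
lemma M_one: "\<one>\<^bsub>Mgrp G\<^esub> = Zc" by (simp add: Mgrp_def)
lemma Z_coset_one: "Zc #> \<one> = Zc" by (rule coset_mult_one[OF Z_car])

lemma M_group: "group (Mgrp G)" unfolding Mgrp_def by (rule normal.factorgroup_is_group[OF Z_normal])

lemma M_comm_group: "comm_group (Mgrp G)"
proof (rule group.group_comm_groupI[OF M_group])
  fix x y assume x: "x \<in> carrier (Mgrp G)" and y: "y \<in> carrier (Mgrp G)"
  obtain g where g: "g \<in> carrier G" "x = Zc #> g" using M_cases[OF x] by blast
  obtain h where h: "h \<in> carrier G" "y = Zc #> h" using M_cases[OF y] by blast
  have "g \<otimes> h = comm G g h \<otimes> (h \<otimes> g)"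
    using ghc[OF g(1) h(1)] Z_comm[OF comm_Z[OF g(1) h(1)]] g h by simp
  hence "Zc #> (g \<otimes> h) = Zc #> (h \<otimes> g)" using comm_Z[OF g(1) h(1)] g h by (simp add: coset_Z)
  thus "x \<otimes>\<^bsub>Mgrp G\<^esub> y = y \<otimes>\<^bsub>Mgrp G\<^esub> x" using g h by (simp add: M_mult)
qed

lemma M_projpair: "projpair (Mgrp G) pHM pKM"
proof -
  interpret MG: comm_group "Mgrp G" by (rule M_comm_group)
  show ?thesis
  proof (unfold_locales)
    show "pHM \<in> hom (Mgrp G) (Mgrp G)"
    proof (rule homI)
      fix x assume "x \<in> carrier (Mgrp G)"
      then obtain g where g: "g \<in> carrier G" "x = Zc #> g" using M_cases by blast
      thus "pHM x \<in> carrier (Mgrp G)" by (simp add: pHM_eq M_in)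
    next
      fix x y assume x: "x \<in> carrier (Mgrp G)" and y: "y \<in> carrier (Mgrp G)"
      obtain g where g: "g \<in> carrier G" "x = Zc #> g" using M_cases[OF x] by blast
      obtain h where h: "h \<in> carrier G" "y = Zc #> h" using M_cases[OF y] by blast
      show "pHM (x \<otimes>\<^bsub>Mgrp G\<^esub> y) = pHM x \<otimes>\<^bsub>Mgrp G\<^esub> pHM y"
        using g h by (simp add: M_mult pHM_eq e_mult)
    qed
    show "pKM \<in> hom (Mgrp G) (Mgrp G)"
    proof (rule homI)
      fix x assume "x \<in> carrier (Mgrp G)"
      then obtain g where g: "g \<in> carrier G" "x = Zc #> g" using M_cases by blast
      thus "pKM x \<in> carrier (Mgrp G)" by (simp add: pKM_eq M_in)
    next
      fix x y assume x: "x \<in> carrier (Mgrp G)" and y: "y \<in> carrier (Mgrp G)"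
      obtain g where g: "g \<in> carrier G" "x = Zc #> g" using M_cases[OF x] by blast
      obtain h where h: "h \<in> carrier G" "y = Zc #> h" using M_cases[OF y] by blast
      show "pKM (x \<otimes>\<^bsub>Mgrp G\<^esub> y) = pKM x \<otimes>\<^bsub>Mgrp G\<^esub> pKM y"
        using g h by (simp add: M_mult pKM_eq e_mult)
    qed
  next
    fix x assume "x \<in> carrier (Mgrp G)"
    then obtain g where g: "g \<in> carrier G" "x = Zc #> g" using M_cases by blast
    have gd: "eH g \<otimes> eK g = g" using e_props(3)[OF g(1)] by simp
    show "pHM x \<otimes>\<^bsub>Mgrp G\<^esub> pKM x = x" using g by (simp add: pHM_eq pKM_eq M_mult gd)
    show "pHM (pHM x) = pHM x" using g by (simp add: pHM_eq eHH)
    show "pKM (pKM x) = pKM x" using g by (simp add: pKM_eq eKK)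
    show "pHM (pKM x) = \<one>\<^bsub>Mgrp G\<^esub>" using g by (simp add: pHM_eq pKM_eq eHK M_one Z_coset_one)
    show "pKM (pHM x) = \<one>\<^bsub>Mgrp G\<^esub>" using g by (simp add: pHM_eq pKM_eq eKH M_one Z_coset_one)
  qed
qed

end

context dprod
begin

lemma N_carrier: "carrier (Ngrp G) = Gd" by (simp add: Ngrp_def)
lemma N_mult: "x \<otimes>\<^bsub>Ngrp G\<^esub> y = x \<otimes> y" by (simp add: Ngrp_def)
lemma N_one: "\<one>\<^bsub>Ngrp G\<^esub> = \<one>" by (simp add: Ngrp_def)

lemma N_group: "group (Ngrp G)" unfolding Ngrp_def by (rule subgroup_imp_group[OF Gd_subgroup])

lemma N_comm_group: "comm_group (Ngrp G)"
proof (rule group.group_comm_groupI[OF N_group])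
  fix x y assume "x \<in> carrier (Ngrp G)" "y \<in> carrier (Ngrp G)"
  hence x: "x \<in> Zc" and y: "y \<in> carrier G" using nil2 Gd_car by (auto simp: N_carrier)
  show "x \<otimes>\<^bsub>Ngrp G\<^esub> y = y \<otimes>\<^bsub>Ngrp G\<^esub> x" using Z_comm[OF x y] by (simp add: N_mult)
qed

lemma e_Gd: assumes c: "c \<in> Gd" shows "eH c \<in> Gd \<and> eK c \<in> Gd"
  using c unfolding comm_subgroup_def
proof (induction rule: generate.induct)
  case one
  have "eH \<one> = \<one>" "eK \<one> = \<one>" using eH_H eK_H subgroup.one_closed[OF sH] by auto
  thus ?case by (simp add: generate.one)
next
  case (incl h)
  then obtain g g' where gg: "g \<in> carrier G" "g' \<in> carrier G" "h = comm G g g'" by blast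
  have m1: "comm G (eH g) (eH g') \<in> {comm G g h | g h. g \<in> carrier G \<and> h \<in> carrier G}"
    using eH_car[OF gg(1)] eH_car[OF gg(2)] by blast
  have m2: "comm G (eK g) (eK g') \<in> {comm G g h | g h. g \<in> carrier G \<and> h \<in> carrier G}"
    using eK_car[OF gg(1)] eK_car[OF gg(2)] by blast
  have "eH h = comm G (eH g) (eH g')" "eK h = comm G (eK g) (eK g')"
    using gg by (simp_all add: eH_comm eK_comm)
  thus ?case using generate.incl[OF m1, of G] generate.incl[OF m2, of G] by simp
next
  case (inv h)
  then obtain g g' where gg: "g \<in> carrier G" "g' \<in> carrier G" "h = comm G g g'" by blast
  have m1: "comm G (eH g) (eH g') \<in> {comm G g h | g h. g \<in> carrier G \<and> h \<in> carrier G}"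
    using eH_car[OF gg(1)] eH_car[OF gg(2)] by blast
  have m2: "comm G (eK g) (eK g') \<in> {comm G g h | g h. g \<in> carrier G \<and> h \<in> carrier G}"
    using eK_car[OF gg(1)] eK_car[OF gg(2)] by blast
  have "eH (inv h) = inv (comm G (eH g) (eH g'))" "eK (inv h) = inv (comm G (eK g) (eK g'))"
    using gg by (simp_all add: eH_inv eK_inv eH_comm eK_comm)
  thus ?case using generate.inv[OF m1, of G] generate.inv[OF m2, of G] by simp
next
  case (eng h1 h2)
  have c1: "h1 \<in> carrier G" "h2 \<in> carrier G"
    using Gd_car[unfolded comm_subgroup_def, OF eng.hyps(1)] Gd_car[unfolded comm_subgroup_def, OF eng.hyps(2)]
    by simp_all
  have "eH (h1 \<otimes> h2) = eH h1 \<otimes> eH h2" "eK (h1 \<otimes> h2) = eK h1 \<otimes> eK h2"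
    using c1 by (simp_all add: e_mult)
  thus ?case using eng.IH generate.eng[where G=G] by simp
qed

lemma N_projpair: "projpair (Ngrp G) eH eK"
proof -
  interpret NG: comm_group "Ngrp G" by (rule N_comm_group)
  show ?thesis
  proof (unfold_locales)
    show "eH \<in> hom (Ngrp G) (Ngrp G)"
      by (rule homI) (simp_all add: N_carrier N_mult e_Gd e_mult Gd_car)
    show "eK \<in> hom (Ngrp G) (Ngrp G)"
      by (rule homI) (simp_all add: N_carrier N_mult e_Gd e_mult Gd_car)
  next
    fix x assume "x \<in> carrier (Ngrp G)"
    hence x: "x \<in> carrier G" using Gd_car by (simp add: N_carrier)
    show "eH x \<otimes>\<^bsub>Ngrp G\<^esub> eK x = x" using e_props(3)[OF x] by (simp add: N_mult)
    show "eH (eH x) = eH x" using x by (rule eHH)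
    show "eK (eK x) = eK x" using x by (rule eKK)
    show "eH (eK x) = \<one>\<^bsub>Ngrp G\<^esub>" using x by (simp add: eHK N_one)
    show "eK (eH x) = \<one>\<^bsub>Ngrp G\<^esub>" using x by (simp add: eKH N_one)
  qed
qed

lemma comm_H_r: assumes a: "a \<in> H" and h: "h \<in> carrier G" shows "comm G a h = comm G a (eH h)"
proof -
  obtain h1 k1 where hk: "h1 \<in> H" "k1 \<in> K" and hd: "h = h1 \<otimes> k1" using decomp_ex[OF h] by blast
  have ac: "a \<in> carrier G" using a by (rule H_car)
  have c: "h1 \<in> carrier G" "k1 \<in> carrier G" using hk H_car K_car by auto
  have "comm G a k1 = \<one>" using comm_one_iff[OF ac c(2)] hk_comm[OF a hk(2)] by simp
  thus ?thesis using ac c e_eq(1)[OF hk] by (simp add: hd comm_mult_right)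
qed

lemma comm_K_r: assumes a: "a \<in> K" and h: "h \<in> carrier G" shows "comm G a h = comm G a (eK h)"
proof -
  obtain h1 k1 where hk: "h1 \<in> H" "k1 \<in> K" and hd: "h = h1 \<otimes> k1" using decomp_ex[OF h] by blast
  have ac: "a \<in> carrier G" using a by (rule K_car)
  have c: "h1 \<in> carrier G" "k1 \<in> carrier G" using hk H_car K_car by auto
  have "comm G a h1 = \<one>" using comm_one_iff[OF ac c(1)] hk_comm[OF hk(1) a] by simp
  thus ?thesis using ac c e_eq(2)[OF hk] by (simp add: hd comm_mult_right)
qed

lemma comm_H_l: assumes a: "a \<in> H" and g: "g \<in> carrier G" shows "comm G g a = comm G (eH g) a"
proof -
  obtain h1 k1 where hk: "h1 \<in> H" "k1 \<in> K" and gd: "g = h1 \<otimes> k1" using decomp_ex[OF g] by blast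
  have ac: "a \<in> carrier G" using a by (rule H_car)
  have c: "h1 \<in> carrier G" "k1 \<in> carrier G" using hk H_car K_car by auto
  have "comm G k1 a = \<one>" using comm_one_iff[OF c(2) ac] hk_comm[OF a hk(2)] by simp
  thus ?thesis using ac c e_eq(1)[OF hk] by (simp add: gd comm_mult_left)
qed

lemma comm_K_l: assumes a: "a \<in> K" and g: "g \<in> carrier G" shows "comm G g a = comm G (eK g) a"
proof -
  obtain h1 k1 where hk: "h1 \<in> H" "k1 \<in> K" and gd: "g = h1 \<otimes> k1" using decomp_ex[OF g] by blast
  have ac: "a \<in> carrier G" using a by (rule K_car)
  have c: "h1 \<in> carrier G" "k1 \<in> carrier G" using hk H_car K_car by auto
  have "comm G h1 a = \<one>" using comm_one_iff[OF c(1) ac] hk_comm[OF hk(1) a] by simp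
  thus ?thesis using ac c e_eq(2)[OF hk] by (simp add: gd comm_mult_left)
qed

lemma fhom1: assumes y: "y \<in> carrier (Mgrp G)" shows "(\<lambda>x. fcomm G x y) \<in> hom (Mgrp G) (Ngrp G)"
proof -
  obtain h where h: "h \<in> carrier G" "y = Zc #> h" using M_cases[OF y] by blast
  show ?thesis
  proof (rule homI)
    fix x assume "x \<in> carrier (Mgrp G)"
    then obtain g where g: "g \<in> carrier G" "x = Zc #> g" using M_cases by blast
    show "fcomm G x y \<in> carrier (Ngrp G)" using g h by (simp add: fcomm_eq N_carrier comm_in_Gd)
  next
    fix x x' assume x: "x \<in> carrier (Mgrp G)" and x': "x' \<in> carrier (Mgrp G)"
    obtain g where g: "g \<in> carrier G" "x = Zc #> g" using M_cases[OF x] by blast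
    obtain g' where g': "g' \<in> carrier G" "x' = Zc #> g'" using M_cases[OF x'] by blast
    show "fcomm G (x \<otimes>\<^bsub>Mgrp G\<^esub> x') y = fcomm G x y \<otimes>\<^bsub>Ngrp G\<^esub> fcomm G x' y"
      using g g' h by (simp add: M_mult fcomm_eq N_mult comm_mult_left)
  qed
qed

lemma fhom2: assumes x: "x \<in> carrier (Mgrp G)" shows "(\<lambda>y. fcomm G x y) \<in> hom (Mgrp G) (Ngrp G)"
proof -
  obtain g where g: "g \<in> carrier G" "x = Zc #> g" using M_cases[OF x] by blast
  show ?thesis
  proof (rule homI)
    fix y assume "y \<in> carrier (Mgrp G)"
    then obtain h where h: "h \<in> carrier G" "y = Zc #> h" using M_cases by blast
    show "fcomm G x y \<in> carrier (Ngrp G)" using g h by (simp add: fcomm_eq N_carrier comm_in_Gd)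
  next
    fix y y' assume y: "y \<in> carrier (Mgrp G)" and y': "y' \<in> carrier (Mgrp G)"
    obtain h where h: "h \<in> carrier G" "y = Zc #> h" using M_cases[OF y] by blast
    obtain h' where h': "h' \<in> carrier G" "y' = Zc #> h'" using M_cases[OF y'] by blast
    show "fcomm G x (y \<otimes>\<^bsub>Mgrp G\<^esub> y') = fcomm G x y \<otimes>\<^bsub>Ngrp G\<^esub> fcomm G x y'"
      using g h h' by (simp add: M_mult fcomm_eq N_mult comm_mult_right)
  qed
qed

lemma f_rel:
  assumes x: "x \<in> carrier (Mgrp G)" and y: "y \<in> carrier (Mgrp G)"
  shows "fcomm G (pHM x) y = eH (fcomm G x y)" "fcomm G x (pHM y) = eH (fcomm G x y)"
    "fcomm G (pKM x) y = eK (fcomm G x y)" "fcomm G x (pKM y) = eK (fcomm G x y)"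
proof -
  obtain g where g: "g \<in> carrier G" "x = Zc #> g" using M_cases[OF x] by blast
  obtain h where h: "h \<in> carrier G" "y = Zc #> h" using M_cases[OF y] by blast
  have eg: "eH g \<in> H" "eK g \<in> K" "eH h \<in> H" "eK h \<in> K" using e_props g h by auto
  show "fcomm G (pHM x) y = eH (fcomm G x y)"
    using g h by (simp add: pHM_eq fcomm_eq eH_comm comm_H_r[OF eg(1) h(1)])
  show "fcomm G x (pHM y) = eH (fcomm G x y)"
    using g h by (simp add: pHM_eq fcomm_eq eH_comm comm_H_l[OF eg(3) g(1)])
  show "fcomm G (pKM x) y = eK (fcomm G x y)"
    using g h by (simp add: pKM_eq fcomm_eq eK_comm comm_K_r[OF eg(2) h(1)])
  show "fcomm G x (pKM y) = eK (fcomm G x y)"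
    using g h by (simp add: pKM_eq fcomm_eq eK_comm comm_K_l[OF eg(4) g(1)])
qed

lemma M_pow: "g \<in> carrier G \<Longrightarrow> (Zc #> g) [^]\<^bsub>Mgrp G\<^esub> (n::int) = Zc #> (g [^] n)"
  using hom_int_pow[OF normal.r_coset_hom_Mod[OF Z_normal] _ is_group M_group[unfolded Mgrp_def]]
  by (simp add: Mgrp_def)

lemma N_pow: "c \<in> Gd \<Longrightarrow> c [^]\<^bsub>Ngrp G\<^esub> (n::int) = c [^] n"
  unfolding Ngrp_def by (rule int_pow_consistent[OF Gd_subgroup, symmetric])

lemma witness:
  assumes tf: "torsion_free G" and a: "a \<in> carrier G" and b: "b \<in> carrier G" and ab: "a \<otimes> b \<noteq> b \<otimes> a"
  shows "Zc #> a \<in> carrier (Mgrp G)" "\<forall>n::int. (Zc #> a) [^]\<^bsub>Mgrp G\<^esub> n = \<one>\<^bsub>Mgrp G\<^esub> \<longrightarrow> n = 0"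
    "comm G a b \<in> carrier (Ngrp G)" "\<forall>n::int. comm G a b [^]\<^bsub>Ngrp G\<^esub> n = \<one>\<^bsub>Ngrp G\<^esub> \<longrightarrow> n = 0"
proof -
  show "Zc #> a \<in> carrier (Mgrp G)" using a by (rule M_in)
  show "comm G a b \<in> carrier (Ngrp G)" using a b by (simp add: N_carrier comm_in_Gd)
  have cne: "comm G a b \<noteq> \<one>" using comm_one_iff[OF a b] ab by simp
  have cc: "comm G a b \<in> carrier G" using a b by simp
  have tfc: "n = 0" if "comm G a b [^] (n::int) = \<one>" for n
    using tf_int[OF tf cc cne that] .
  show "\<forall>n::int. comm G a b [^]\<^bsub>Ngrp G\<^esub> n = \<one>\<^bsub>Ngrp G\<^esub> \<longrightarrow> n = 0"
    using tfc a b by (simp add: N_pow comm_in_Gd N_one)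
  show "\<forall>n::int. (Zc #> a) [^]\<^bsub>Mgrp G\<^esub> n = \<one>\<^bsub>Mgrp G\<^esub> \<longrightarrow> n = 0"
  proof (intro allI impI)
    fix n :: int assume "(Zc #> a) [^]\<^bsub>Mgrp G\<^esub> n = \<one>\<^bsub>Mgrp G\<^esub>"
    hence e: "Zc #> (a [^] n) = Zc" using a by (simp add: M_pow M_one)
    have "a [^] n \<in> Zc #> (a [^] n)" using a Z_subgroup by (simp add: rcos_self)
    hence "a [^] n \<in> Zc" using e by simp
    hence "comm G (a [^] n) b = \<one>" using b by (rule comm_Zl)
    hence "comm G a b [^] n = \<one>" using a b by (simp add: comm_pow_left)
    thus "n = 0" by (rule tfc)
  qed
qed

end

theorem proposition3p4:
  fixes G :: "('a, 'b) monoid_scheme"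
  assumes "group G"
    and "finitely_generated G"
    and "torsion_free G"
    and "two_step_nilpotent G"
    and "maximal_scalars_is_Z G"
  shows "\<not> (\<exists>H K. H \<lhd> G \<and> K \<lhd> G \<and> H \<inter> K = {\<one>\<^bsub>G\<^esub>} \<and> H <#>\<^bsub>G\<^esub> K = carrier G \<and>
                \<not> abelian_subset G H \<and> \<not> abelian_subset G K)"
proof
  assume "\<exists>H K. H \<lhd> G \<and> K \<lhd> G \<and> H \<inter> K = {\<one>\<^bsub>G\<^esub>} \<and> H <#>\<^bsub>G\<^esub> K = carrier G \<and>
                \<not> abelian_subset G H \<and> \<not> abelian_subset G K"
  then obtain H K where HK: "H \<lhd> G" "K \<lhd> G" "H \<inter> K = {\<one>\<^bsub>G\<^esub>}" "H <#>\<^bsub>G\<^esub> K = carrier G"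
    and naH: "\<not> abelian_subset G H" and naK: "\<not> abelian_subset G K" by blast
  have nil: "comm_subgroup G \<subseteq> grp_center G" using assms(4) unfolding two_step_nilpotent_def by simp
  interpret dprod G H K
    by (rule dprod.intro[OF assms(1) dprod_axioms.intro[OF HK(1) HK(2) HK(3) HK(4) nil]])
  obtain a b where ab: "a \<in> H" "b \<in> H" "a \<otimes>\<^bsub>G\<^esub> b \<noteq> b \<otimes>\<^bsub>G\<^esub> a"
    using naH unfolding abelian_subset_def by blast
  obtain c d where cd: "c \<in> K" "d \<in> K" "c \<otimes>\<^bsub>G\<^esub> d \<noteq> d \<otimes>\<^bsub>G\<^esub> c"
    using naK unfolding abelian_subset_def by blast
  have abc: "a \<in> carrier G" "b \<in> carrier G" using ab(1,2) H_car by auto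
  have cdc: "c \<in> carrier G" "d \<in> carrier G" using cd(1,2) K_car by auto
  have commH: "comm G a b \<in> H"
    using ab(1,2) sH by (simp add: comm_def subgroup.m_closed subgroup.m_inv_closed)
  have commK: "comm G c d \<in> K"
    using cd(1,2) sK by (simp add: comm_def subgroup.m_closed subgroup.m_inv_closed)
  note wH = witness[OF assms(3) abc ab(3)]
  note wK = witness[OF assms(3) cdc cd(3)]
  have maxZ: "\<forall>(R :: ('a set \<Rightarrow> 'a set) ring) \<rho>M \<rho>N. cring R \<and> faithful_action R (Mgrp G) \<rho>M \<and> faithful_action R (Ngrp G) \<rho>N \<and>
     (\<forall>r \<in> carrier R. \<forall>x \<in> carrier (Mgrp G). \<forall>y \<in> carrier (Mgrp G).
        fcomm G (\<rho>M r x) y = \<rho>N r (fcomm G x y) \<and> fcomm G x (\<rho>M r y) = \<rho>N r (fcomm G x y)) \<longrightarrow>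
     (\<forall>r \<in> carrier R. \<exists>n::int. \<forall>x \<in> carrier (Mgrp G). \<rho>M r x = x [^]\<^bsub>Mgrp G\<^esub> n)"
    using assms(5) unfolding maximal_scalars_is_Z_def ring_of_scalars_def by (rule conjunct2)
  show False
  proof (rule abstract_contra[OF M_projpair N_projpair fhom1 _ _ fhom2 _ _ wH(1) _ wH(2) wK(1) _ wK(2)
        wH(3) _ wH(4) wK(3) _ wK(4) maxZ])
    show "\<And>x y. x \<in> carrier (Mgrp G) \<Longrightarrow> y \<in> carrier (Mgrp G) \<Longrightarrow> fcomm G (pHM x) y = eH (fcomm G x y)"
      by (rule f_rel(1))
    show "\<And>x y. x \<in> carrier (Mgrp G) \<Longrightarrow> y \<in> carrier (Mgrp G) \<Longrightarrow> fcomm G (pKM x) y = eK (fcomm G x y)"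
      by (rule f_rel(3))
    show "\<And>x y. x \<in> carrier (Mgrp G) \<Longrightarrow> y \<in> carrier (Mgrp G) \<Longrightarrow> fcomm G x (pHM y) = eH (fcomm G x y)"
      by (rule f_rel(2))
    show "\<And>x y. x \<in> carrier (Mgrp G) \<Longrightarrow> y \<in> carrier (Mgrp G) \<Longrightarrow> fcomm G x (pKM y) = eK (fcomm G x y)"
      by (rule f_rel(4))
    show "pHM (grp_center G #>\<^bsub>G\<^esub> a) = grp_center G #>\<^bsub>G\<^esub> a" using abc by (simp add: pHM_eq eH_H ab(1))
    show "pKM (grp_center G #>\<^bsub>G\<^esub> c) = grp_center G #>\<^bsub>G\<^esub> c" using cdc by (simp add: pKM_eq eK_K cd(1))
    show "eH (comm G a b) = comm G a b" using commH by (rule eH_H)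
    show "eK (comm G c d) = comm G c d" using commK by (rule eK_K)
  qed
qed

end
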